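(* Let $m\ge2$ be an integer and let $A$ be a left brace with $A^{(3)}=A^{m+1}=\{0\}$. Let $a\in A$, and define $a_1=a$ and $a_{j+1}=a*a_j$ for $j\ge1$. Let $t=\sum_{i=1}^m t_ia_i$ with $t_i\in\mathbb{Z}$. Then the inverse of $t$ in the group $(A,\cdot)$ is \[t^{-1}=\sum_{j=1}^m\Bigl(-\sum_{k=0}^{j-1}\binom{-t_1}{k}t_{j-k}\Bigr)a_j.\]
   Context: A left brace $(A,+,\cdot)$ is a set $A$ with two binary operations such that $(A,+)$ is an abelian group, $(A,\cdot)$ is a group, and $a(b+c)=ab-a+ac$ for all $a,b,c\in A$. In a left brace, $a*b=-a+ab-b$. For subsets $L,M\subseteq A$, $L*M$ is the subgroup of $(A,+)$ generated by $\{l*m\mid l\in L,m\in M\}$. Set $A^{(1)}=A$, $A^{(r+1)}=A^{(r)}*A$, and $A^1=A$, $A^{r+1}=A*A^r$ for $r\ge1$. Generalised binomial coefficients: for $n\in\mathbb{Z}$ and integer $k\ge0$, $\binom{n}{0}=1$ and $\binom{n}{k}=\frac{n(n-1)\cdots(n-k+1)}{k!}$ for $k>0$. *)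

theory Defs
  imports Main
begin

text \<open>A left brace: the additive group is the ambient abelian group (type class
ab_group_add); the multiplication is a separate operation mul.\<close>

definition is_group_op :: "('a \<Rightarrow> 'a \<Rightarrow> 'a) \<Rightarrow> bool" where
  "is_group_op mul \<longleftrightarrow>
     (\<forall>x y z. mul (mul x y) z = mul x (mul y z)) \<and>
     (\<exists>e. (\<forall>x. mul e x = x \<and> mul x e = x) \<and> (\<forall>x. \<exists>y. mul x y = e \<and> mul y x = e))"

definition left_brace :: "('a::ab_group_add \<Rightarrow> 'a \<Rightarrow> 'a) \<Rightarrow> bool" where
  "left_brace mul \<longleftrightarrow> is_group_op mul \<and>
     (\<forall>a b c. mul a (b + c) = mul a b - a + mul a c)"

definition mul_one :: "('a \<Rightarrow> 'a \<Rightarrow> 'a) \<Rightarrow> 'a" where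
  "mul_one mul = (THE e. \<forall>x. mul e x = x \<and> mul x e = x)"

definition mul_inv :: "('a \<Rightarrow> 'a \<Rightarrow> 'a) \<Rightarrow> 'a \<Rightarrow> 'a" where
  "mul_inv mul x = (THE y. mul x y = mul_one mul \<and> mul y x = mul_one mul)"

definition bstar :: "('a::ab_group_add \<Rightarrow> 'a \<Rightarrow> 'a) \<Rightarrow> 'a \<Rightarrow> 'a \<Rightarrow> 'a" where
  "bstar mul a b = - a + mul a b - b"

definition add_span :: "'a::ab_group_add set \<Rightarrow> 'a set" where
  "add_span S = \<Inter>{H. 0 \<in> H \<and> (\<forall>x\<in>H. \<forall>y\<in>H. x - y \<in> H) \<and> S \<subseteq> H}"

definition star_set :: "('a::ab_group_add \<Rightarrow> 'a \<Rightarrow> 'a) \<Rightarrow> 'a set \<Rightarrow> 'a set \<Rightarrow> 'a set" where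
  "star_set mul L M = add_span {bstar mul l x | l x. l \<in> L \<and> x \<in> M}"

text \<open>right_series mul r = A^(r), left_series mul r = A^r, for r \<ge> 1
  (index 0 is also set to A, by convention; it is never used).\<close>
fun right_series :: "('a::ab_group_add \<Rightarrow> 'a \<Rightarrow> 'a) \<Rightarrow> nat \<Rightarrow> 'a set" where
  "right_series mul 0 = UNIV"
| "right_series mul (Suc 0) = UNIV"
| "right_series mul (Suc (Suc r)) = star_set mul (right_series mul (Suc r)) UNIV"

fun left_series :: "('a::ab_group_add \<Rightarrow> 'a \<Rightarrow> 'a) \<Rightarrow> nat \<Rightarrow> 'a set" where
  "left_series mul 0 = UNIV"
| "left_series mul (Suc 0) = UNIV"
| "left_series mul (Suc (Suc r)) = star_set mul UNIV (left_series mul (Suc r))"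

text \<open>a_1 = a, a_(j+1) = a * a_j (index 0 unused, set to a).\<close>
fun aseq :: "('a::ab_group_add \<Rightarrow> 'a \<Rightarrow> 'a) \<Rightarrow> 'a \<Rightarrow> nat \<Rightarrow> 'a" where
  "aseq mul a 0 = a"
| "aseq mul a (Suc 0) = a"
| "aseq mul a (Suc (Suc j)) = bstar mul a (aseq mul a (Suc j))"

definition zmult :: "int \<Rightarrow> 'a::ab_group_add \<Rightarrow> 'a" where
  "zmult k x = (if 0 \<le> k then (\<Sum>_\<in>{..<nat k}. x) else - (\<Sum>_\<in>{..<nat (-k)}. x))"

text \<open>Generalised binomial coefficient n(n-1)...(n-k+1)/k! for integer n (the division is exact).\<close>
definition gbinom :: "int \<Rightarrow> nat \<Rightarrow> int" where
  "gbinom n k = (\<Prod>i<k. n - int i) div fact k"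

end

theory Submission
  imports Defs Complex_Main
begin

lemma gbinom_pascal: "gbinom (x+1) (Suc k) = gbinom x k + gbinom x (Suc k)"
  using gbinomial_int_Suc_Suc[of x k] unfolding gbinom_def gbinomial_prod_rev atLeast0LessThan .

lemma gbinom_0[simp]: "gbinom n 0 = 1" by (simp add: gbinom_def)

lemma gbinom_0_Suc[simp]: "gbinom 0 (Suc k) = 0"
  by (simp add: gbinom_def lessThan_Suc_eq_insert_0)

lemma zmult_0[simp]: "zmult 0 x = 0" by (simp add: zmult_def)

lemma zmult_plus1: "zmult (k+1) x = zmult k x + x"
proof (cases "0 \<le> k")
  case True
  then have "nat (k+1) = Suc (nat k)" by simp
  then show ?thesis using True by (simp add: zmult_def add.commute)
next
  case False
  show ?thesis
  proof (cases "k = -1")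
    case True then show ?thesis by (simp add: zmult_def)
  next
    case F2: False
    then have "nat (-k) = Suc (nat (-(k+1)))" using False by simp
    then show ?thesis using False F2 by (simp add: zmult_def add.commute)
  qed
qed

lemma zmult_minus1: "zmult (k-1) x = zmult k x - x"
  using zmult_plus1[of "k-1" x] by simp

lemma zmult_add_left: "zmult (k+l) x = zmult k x + zmult l x"
proof (induct l rule: int_induct[where k=0])
  case base then show ?case by simp
next
  case (step1 i)
  have "zmult (k + (i+1)) x = zmult ((k+i)+1) x" by (simp only: add.assoc)
  also have "\<dots> = zmult (k+i) x + x" by (rule zmult_plus1)
  also have "\<dots> = zmult k x + (zmult i x + x)" using step1(2) by (simp add: add.assoc)
  finally show ?case by (simp only: zmult_plus1)
next
  case (step2 i)
  have "zmult (k + (i-1)) x = zmult ((k+i)-1) x" by (simp only: add_diff_eq)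
  also have "\<dots> = zmult (k+i) x - x" by (rule zmult_minus1)
  also have "\<dots> = zmult k x + (zmult i x - x)" using step2(2) by (simp add: add_diff_eq)
  finally show ?case by (simp only: zmult_minus1)
qed

lemma zmult_hom:
  assumes "\<And>x y. f (x+y) = f x + f y"
  shows "f (zmult k x) = zmult k (f x)"
proof -
  have f0: "f 0 = 0" using assms[of 0 0] by simp
  have fm: "f (x - y) = f x - f y" for x y using assms[of "x-y" y] by (simp add: algebra_simps)
  show ?thesis
  proof (induct k rule: int_induct[where k=0])
    case base then show ?case by (simp add: f0)
  next
    case (step1 i) then show ?case by (simp add: zmult_plus1 assms)
  next
    case (step2 i) then show ?case by (simp add: zmult_minus1 fm)
  qed
qed

lemma zmult_distrib: "zmult k (x+y) = zmult k x + zmult k y"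
proof (induct k rule: int_induct[where k=0])
  case base then show ?case by simp
next
  case (step1 i) show ?case unfolding zmult_plus1 using step1 by (simp add: algebra_simps)
next
  case (step2 i) show ?case unfolding zmult_minus1 using step2 by (simp add: algebra_simps)
qed

lemma zmult_zero[simp]: "zmult k 0 = 0"
  using zmult_distrib[of k 0 0] by simp

lemma zmult_sum: "zmult k (sum f A) = (\<Sum>i\<in>A. zmult k (f i))"
  by (induct A rule: infinite_finite_induct) (auto simp: zmult_distrib)

definition lam :: "('a::ab_group_add \<Rightarrow> 'a \<Rightarrow> 'a) \<Rightarrow> 'a \<Rightarrow> 'a \<Rightarrow> 'a" where
  "lam mul x y = - x + mul x y"

lemma mul_lam: "mul x y = x + lam mul x y" by (simp add: lam_def)

lemma lam_bstar: "lam mul x y = y + bstar mul x y" by (simp add: lam_def bstar_def)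

context
  fixes mul :: "'a::ab_group_add \<Rightarrow> 'a \<Rightarrow> 'a"
  assumes B: "left_brace mul"
begin

lemma lam_add: "lam mul x (y + z) = lam mul x y + lam mul x z"
  using B unfolding left_brace_def lam_def by (simp add: algebra_simps)

lemma massoc: "mul (mul x y) z = mul x (mul y z)"
  using B unfolding left_brace_def is_group_op_def by blast

lemma mul_zero_right: "mul x 0 = x"
  using lam_add[of x 0 0] by (simp add: lam_def)

lemma ex_id: "\<exists>e. (\<forall>x. mul e x = x \<and> mul x e = x) \<and> (\<forall>x. \<exists>y. mul x y = e \<and> mul y x = e)"
  using B unfolding left_brace_def is_group_op_def by blast

lemma zero_id: "mul 0 x = x" "\<forall>x. \<exists>y. mul x y = 0 \<and> mul y x = 0"
proof -
  obtain e where e: "\<forall>x. mul e x = x \<and> mul x e = x" "\<forall>x. \<exists>y. mul x y = e \<and> mul y x = e"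
    using ex_id by blast
  have "e = 0" using e(1) mul_zero_right[of e] by metis
  then show "mul 0 x = x" "\<forall>x. \<exists>y. mul x y = 0 \<and> mul y x = 0" using e by auto
qed

lemma lam_zero: "lam mul 0 z = z" by (simp add: lam_def zero_id)

lemma bdist: "mul a (b + c) = mul a b - a + mul a c"
  using B unfolding left_brace_def by blast

lemma lam_mul: "lam mul (mul x y) z = lam mul x (lam mul y z)"
proof -
  have "mul x (mul y z) = mul x (y + lam mul y z)" by (simp only: mul_lam[of mul y z])
  also have "\<dots> = mul x y - x + mul x (lam mul y z)" by (rule bdist)
  finally have e: "mul x (mul y z) = mul x y - x + mul x (lam mul y z)" .
  have "lam mul (mul x y) z = - mul x y + mul (mul x y) z" by (simp only: lam_def)
  also have "\<dots> = - mul x y + mul x (mul y z)" by (simp only: massoc)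
  also have "\<dots> = - x + mul x (lam mul y z)" by (simp only: e) (simp add: algebra_simps)
  also have "\<dots> = lam mul x (lam mul y z)" by (simp only: lam_def)
  finally show ?thesis .
qed

lemma mul_cancel: assumes "mul a x = mul a y" shows "x = y"
proof -
  obtain b where b: "mul b a = 0" using zero_id(2) by blast
  have "mul b (mul a x) = mul b (mul a y)" using assms by simp
  then have "mul (mul b a) x = mul (mul b a) y" by (simp only: massoc)
  then show ?thesis using b zero_id(1) by simp
qed

lemma lam_inj: assumes "lam mul a x = lam mul a y" shows "x = y"
proof (rule mul_cancel)
  have "mul a x = a + lam mul a x" by (rule mul_lam)
  also have "\<dots> = a + lam mul a y" by (simp only: assms)
  also have "\<dots> = mul a y" by (rule mul_lam[symmetric])
  finally show "mul a x = mul a y" .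
qed

lemma inv_char: assumes "mul u t = 0" shows "mul_inv mul t = u"
proof -
  obtain v where v: "mul t v = 0" "mul v t = 0" using zero_id(2) by blast
  have uv: "y = v" if "mul y t = 0" for y
  proof -
    have "y = mul y (mul t v)" by (simp only: v mul_zero_right)
    also have "\<dots> = mul (mul y t) v" by (simp only: massoc)
    also have "\<dots> = v" by (simp only: that zero_id(1))
    finally show ?thesis .
  qed
  have id0: "\<forall>x. mul 0 x = x \<and> mul x 0 = x" using zero_id(1) mul_zero_right by blast
  have one: "mul_one mul = 0"
    unfolding mul_one_def
  proof (rule the_equality)
    show "\<forall>x. mul 0 x = x \<and> mul x 0 = x" by (rule id0)
  next
    fix e assume "\<forall>x. mul e x = x \<and> mul x e = x"
    then have "mul e 0 = 0" by blast
    then show "e = 0" using mul_zero_right[of e] by simp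
  qed
  have "u = v" by (rule uv[OF assms])
  then have tu: "mul t u = 0" using v by simp
  show ?thesis unfolding mul_inv_def one
  proof (rule the_equality)
    show "mul t u = 0 \<and> mul u t = 0" using tu assms by blast
  next
    fix y assume "mul t y = 0 \<and> mul y t = 0"
    then have "y = v" using uv by blast
    then show "y = u" using uv[OF assms] by simp
  qed
qed

lemma lam_hom: "lam mul x (zmult k y) = zmult k (lam mul x y)"
  by (rule zmult_hom) (rule lam_add)

lemma lam_0: "lam mul x 0 = 0"
proof -
  have "lam mul x (0 + 0) = lam mul x 0 + lam mul x 0" by (rule lam_add)
  then have "lam mul x 0 = lam mul x 0 + lam mul x 0" by (simp only: add_0_left)
  then show ?thesis by (metis add_cancel_right_right)
qed

lemma lam_sum: "lam mul x (sum f A) = (\<Sum>i\<in>A. lam mul x (f i))"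
proof (induct A rule: infinite_finite_induct)
  case (infinite A) then show ?case by (simp add: lam_0)
next
  case empty then show ?case by (simp add: lam_0)
next
  case (insert i F) then show ?case by (simp add: lam_add)
qed

lemma lam_K: assumes "\<And>z. lam mul s z = z" shows "lam mul (x + s) z = lam mul x z"
proof -
  have "mul s x = s + lam mul s x" by (rule mul_lam)
  also have "\<dots> = x + s" by (simp only: assms add.commute)
  finally have "mul s x = x + s" .
  then have "lam mul (x + s) z = lam mul s (lam mul x z)" by (simp only: lam_mul[symmetric])
  then show ?thesis by (simp only: assms)
qed

end


lemma span_gen: "x \<in> S \<Longrightarrow> x \<in> add_span S" unfolding add_span_def by blast
lemma span_0: "0 \<in> add_span S" unfolding add_span_def by blast
lemma span_diff: "x \<in> add_span S \<Longrightarrow> y \<in> add_span S \<Longrightarrow> x - y \<in> add_span S"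
  unfolding add_span_def by blast
lemma span_add: assumes "x \<in> add_span S" "y \<in> add_span S" shows "x + y \<in> add_span S"
proof -
  have "0 - y \<in> add_span S" using span_diff[OF span_0 assms(2)] .
  then have "x - (0 - y) \<in> add_span S" using span_diff[OF assms(1)] by blast
  then show ?thesis by simp
qed
lemma span_zmult: assumes "x \<in> add_span S" shows "zmult k x \<in> add_span S"
proof (induct k rule: int_induct[where k=0])
  case base then show ?case by (simp add: span_0)
next
  case (step1 i) then show ?case unfolding zmult_plus1 using assms span_add by blast
next
  case (step2 i) then show ?case unfolding zmult_minus1 using assms span_diff by blast
qed
lemma span_sum: "(\<And>i. i \<in> A \<Longrightarrow> f i \<in> add_span S) \<Longrightarrow> sum f A \<in> add_span S"
proof (induct A rule: infinite_finite_induct)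
  case (infinite A) then show ?case by (simp add: span_0)
next
  case empty then show ?case by (simp add: span_0)
next
  case (insert i F) then show ?case by (simp add: span_add)
qed

definition V :: "('a::ab_group_add \<Rightarrow> 'a \<Rightarrow> 'a) \<Rightarrow> 'a \<Rightarrow> nat \<Rightarrow> (nat \<Rightarrow> int) \<Rightarrow> 'a" where
  "V mul a m c = (\<Sum>i=1..m. zmult (c i) (aseq mul a i))"

definition shift :: "(nat \<Rightarrow> int) \<Rightarrow> nat \<Rightarrow> int" where
  "shift c i = (if i \<le> 1 then 0 else c (i - 1))"

definition Bc :: "int \<Rightarrow> (nat \<Rightarrow> int) \<Rightarrow> nat \<Rightarrow> int" where
  "Bc n c j = (\<Sum>k=0..j-1. gbinom n k * c (j - k))"

lemma V_add: "V mul a m c + V mul a m d = V mul a m (\<lambda>i. c i + d i)"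
  unfolding V_def by (simp add: zmult_add_left sum.distrib)

lemma V_cong: "(\<And>i. 1 \<le> i \<Longrightarrow> i \<le> m \<Longrightarrow> c i = d i) \<Longrightarrow> V mul a m c = V mul a m d"
  unfolding V_def by (rule sum.cong) auto

lemma V_zero: "V mul a m (\<lambda>_. 0) = 0" unfolding V_def by simp

lemma Bc_1: "Bc n c (Suc 0) = c (Suc 0)" unfolding Bc_def by simp

lemma Bc_0: "1 \<le> j \<Longrightarrow> Bc 0 c j = c j"
proof -
  assume "1 \<le> j"
  then obtain J where j: "j = Suc J" by (cases j) auto
  have "Bc 0 c j = (\<Sum>k=0..J. gbinom 0 k * c (Suc J - k))" unfolding Bc_def j by simp
  also have "\<dots> = gbinom 0 0 * c (Suc J - 0) + (\<Sum>k=0..J-1. gbinom 0 (Suc k) * c (Suc J - Suc k))"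
  proof (cases J)
    case 0 then show ?thesis by simp
  next
    case (Suc J') then show ?thesis by (simp only: sum.atLeast0_atMost_Suc_shift comp_def) simp
  qed
  also have "\<dots> = c j" using j by simp
  finally show ?thesis .
qed

lemma Bc_pascal: "1 \<le> j \<Longrightarrow> Bc (n+1) c j = Bc n c j + shift (Bc n c) j"
proof -
  assume "1 \<le> j"
  then obtain J where j: "j = Suc J" by (cases j) auto
  show ?thesis
  proof (cases J)
    case 0 then show ?thesis using j by (simp add: Bc_def shift_def)
  next
    case (Suc J')
    let ?g = "\<lambda>k. c (Suc J' - k)"
    have "Bc (n+1) c j = (\<Sum>k=0..Suc J'. gbinom (n+1) k * c (Suc (Suc J') - k))"
      unfolding Bc_def j Suc by simp
    also have "\<dots> = c (Suc (Suc J')) + (\<Sum>k=0..J'. gbinom (n+1) (Suc k) * ?g k)"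
      by (simp only: sum.atLeast0_atMost_Suc_shift comp_def) simp
    also have "\<dots> = c (Suc (Suc J')) + (\<Sum>k=0..J'. gbinom n (Suc k) * ?g k) + (\<Sum>k=0..J'. gbinom n k * ?g k)"
      unfolding gbinom_pascal distrib_right sum.distrib by (simp add: ac_simps)
    also have "c (Suc (Suc J')) + (\<Sum>k=0..J'. gbinom n (Suc k) * ?g k) = Bc n c j"
      unfolding Bc_def j Suc by (simp add: sum.atLeast0_atMost_Suc_shift comp_def del: sum.cl_ivl_Suc)
    also have "(\<Sum>k=0..J'. gbinom n k * ?g k) = shift (Bc n c) j"
      unfolding Bc_def shift_def j Suc by simp
    finally show ?thesis .
  qed
qed

context
  fixes mul :: "'a::ab_group_add \<Rightarrow> 'a \<Rightarrow> 'a" and m :: nat and a :: 'a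
  assumes B: "left_brace mul"
    and R3: "right_series mul 3 = {0}"
    and L: "left_series mul (m + 1) = {0}"
begin

lemma D_K: assumes "x \<in> star_set mul UNIV UNIV" shows "lam mul x z = z"
proof -
  have "right_series mul 3 = star_set mul (star_set mul UNIV UNIV) UNIV"
    by (simp add: numeral_3_eq_3)
  moreover have "bstar mul x z \<in> star_set mul (star_set mul UNIV UNIV) UNIV"
    unfolding star_set_def by (rule span_gen) (use assms[unfolded star_set_def] in blast)
  ultimately have "bstar mul x z = 0" using R3 by (metis singletonD)
  then show ?thesis by (simp add: lam_bstar)
qed

lemma aseq_D: "2 \<le> j \<Longrightarrow> aseq mul a j \<in> star_set mul UNIV UNIV"
proof -
  assume "2 \<le> j"
  then obtain i where j: "j = Suc (Suc i)" by (metis add_2_eq_Suc le_Suc_ex)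
  show ?thesis unfolding j star_set_def by (simp, rule span_gen) blast
qed

lemma aseq_left: "aseq mul a (Suc j) \<in> left_series mul (Suc j)"
proof (induct j)
  case 0 then show ?case by simp
next
  case (Suc j)
  show ?case unfolding aseq.simps left_series.simps star_set_def
    by (rule span_gen) (use Suc in blast)
qed

lemma aseq_vanish: "aseq mul a (Suc m) = 0"
  using aseq_left[of m] L by simp

lemma aseq_lam: "1 \<le> j \<Longrightarrow> lam mul a (aseq mul a j) = aseq mul a j + aseq mul a (Suc j)"
proof -
  assume "1 \<le> j"
  then obtain i where j: "j = Suc i" by (cases j) auto
  show ?thesis unfolding j by (simp add: lam_bstar)
qed

lemma lam_V: "lam mul a (V mul a m c) = V mul a m c + V mul a m (shift c)"
proof -
  let ?g = "\<lambda>i. zmult (shift c i) (aseq mul a i)"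
  have "lam mul a (V mul a m c) = (\<Sum>i=1..m. zmult (c i) (aseq mul a i + aseq mul a (Suc i)))"
    unfolding V_def lam_sum[OF B] lam_hom[OF B]
    by (rule sum.cong) (auto simp: aseq_lam)
  also have "\<dots> = V mul a m c + (\<Sum>i=1..m. zmult (c i) (aseq mul a (Suc i)))"
    unfolding V_def by (simp add: zmult_distrib sum.distrib)
  also have "(\<Sum>i=1..m. zmult (c i) (aseq mul a (Suc i))) = (\<Sum>i=1..m. ?g (Suc i))"
    by (rule sum.cong) (auto simp: shift_def)
  also have "\<dots> = V mul a m (shift c)"
  proof (cases "m = 0")
    case True then show ?thesis by (simp add: V_def)
  next
    case False
    then have "sum ?g {1..m} + ?g (Suc m) = ?g 1 + (\<Sum>i=1..m. ?g (Suc i))"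
      by (intro sum.Suc_reindex_ivl) simp
    then show ?thesis unfolding V_def by (simp add: aseq_vanish shift_def)
  qed
  finally show ?thesis .
qed

lemma lam_step: "lam mul (zmult (n+1) a) z = lam mul a (lam mul (zmult n a) z)"
proof -
  have aa: "lam mul a a = a + aseq mul a 2"
    using aseq_lam[of 1] by (simp add: numeral_2_eq_2)
  have "mul a (zmult n a) = a + zmult n (a + aseq mul a 2)"
    by (simp only: mul_lam[of mul a] lam_hom[OF B] aa)
  also have "\<dots> = zmult (n+1) a + zmult n (aseq mul a 2)"
    by (simp only: zmult_distrib zmult_plus1) (simp add: algebra_simps)
  finally have e: "mul a (zmult n a) = zmult (n+1) a + zmult n (aseq mul a 2)" .
  have K: "lam mul (zmult n (aseq mul a 2)) w = w" for w
    by (rule D_K) (unfold star_set_def, rule span_zmult, fold star_set_def, rule aseq_D, simp)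
  have "lam mul (zmult (n+1) a) z = lam mul (zmult (n+1) a + zmult n (aseq mul a 2)) z"
    by (rule lam_K[OF B, symmetric]) (rule K)
  also have "\<dots> = lam mul (mul a (zmult n a)) z" by (simp only: e)
  also have "\<dots> = lam mul a (lam mul (zmult n a) z)" by (rule lam_mul[OF B])
  finally show ?thesis .
qed

lemma lam_T: "lam mul (zmult n a) (V mul a m c) = V mul a m (Bc n c)"
proof (induct n arbitrary: c rule: int_induct[where k=0])
  case base
  show ?case by (simp add: lam_zero[OF B]) (rule V_cong, simp add: Bc_0)
next
  case (step1 i)
  have "lam mul (zmult (i+1) a) (V mul a m c) = lam mul a (V mul a m (Bc i c))"
    by (simp only: lam_step step1(2))
  also have "\<dots> = V mul a m (\<lambda>j. Bc i c j + shift (Bc i c) j)"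
    by (simp only: lam_V V_add)
  also have "\<dots> = V mul a m (Bc (i+1) c)"
    by (rule V_cong) (simp add: Bc_pascal)
  finally show ?case .
next
  case (step2 i)
  have "lam mul a (lam mul (zmult (i-1) a) (V mul a m c)) = lam mul (zmult i a) (V mul a m c)"
    using lam_step[of "i-1"] by simp
  also have "\<dots> = V mul a m (Bc i c)" by (rule step2(2))
  also have "\<dots> = V mul a m (\<lambda>j. Bc (i-1) c j + shift (Bc (i-1) c) j)"
    by (rule V_cong) (use Bc_pascal[of _ "i-1"] in simp)
  also have "\<dots> = lam mul a (V mul a m (Bc (i-1) c))"
    by (simp only: lam_V V_add)
  finally show ?case by (rule lam_inj[OF B])
qed

end

theorem mainTheorem13:
  fixes mul :: "'a::ab_group_add \<Rightarrow> 'a \<Rightarrow> 'a"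
    and m :: nat and a :: 'a and t :: "nat \<Rightarrow> int"
  assumes "m \<ge> 2"
    and "left_brace mul"
    and "right_series mul 3 = {0}"
    and "left_series mul (m + 1) = {0}"
  shows "mul_inv mul (\<Sum>i=1..m. zmult (t i) (aseq mul a i)) =
         (\<Sum>j=1..m. zmult (- (\<Sum>k=0..j-1. gbinom (- t 1) k * t (j - k))) (aseq mul a j))"
proof -
  note B = assms(2) and R3 = assms(3) and L = assms(4)
  define d where "d = (\<lambda>j. - Bc (- t 1) t j)"
  have tV: "(\<Sum>i=1..m. zmult (t i) (aseq mul a i)) = V mul a m t" by (simp add: V_def)
  have uV: "(\<Sum>j=1..m. zmult (- (\<Sum>k=0..j-1. gbinom (- t 1) k * t (j - k))) (aseq mul a j)) = V mul a m d"
    by (simp add: V_def d_def Bc_def)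
  have d1: "d 1 = - t 1" by (simp add: d_def Bc_1)
  have split: "V mul a m d = zmult (d 1) a + (\<Sum>i=2..m. zmult (d i) (aseq mul a i))"
    unfolding V_def using assms(1) by (simp add: sum.atLeast_Suc_atMost numeral_2_eq_2)
  have K: "lam mul (\<Sum>i=2..m. zmult (d i) (aseq mul a i)) w = w" for w
    by (rule D_K[OF B R3 L]) (unfold star_set_def, rule span_sum, rule span_zmult, fold star_set_def, rule aseq_D[OF B R3 L], simp)
  have lamu: "lam mul (V mul a m d) w = lam mul (zmult (- t 1) a) w" for w
    unfolding split d1 by (rule lam_K[OF B]) (rule K)
  have "mul (V mul a m d) (V mul a m t) = V mul a m d + V mul a m (Bc (- t 1) t)"
    by (simp only: mul_lam[of mul "V mul a m d"] lamu lam_T[OF B R3 L])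
  also have "\<dots> = 0" by (simp only: V_add d_def) (simp add: V_zero)
  finally have "mul (V mul a m d) (V mul a m t) = 0" .
  then show ?thesis unfolding tV uV by (rule inv_char[OF B])
qed

end
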